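(* Let $n$ be a positive integer and let $\mathcal F$ be an $\mathcal N$-saturated family of subsets of $[n]$. Let $B'\subseteq[n]$ with $B'\notin\mathcal F$, and suppose there exists $B\in\mathcal F$ with $B\subset B'$, and that $B'$ is a minimal element of some induced copy of $\mathcal N$ in $\mathcal F\cup\{B'\}$. Then there exists an induced copy of $\mathcal N$ in $\mathcal F\cup\{B'\}$ in which $B'$ is a minimal element and the other minimal element contains $B$ as a subset.
   Context: The poset $\mathcal N$ has four elements $a,b,c,d$ with $a<c$, $b<c$, $b<d$ and no other comparabilities (so $a,b$ are its minimal elements and $c,d$ its maximal elements). A family $\mathcal Q$ of sets (ordered by inclusion) contains an induced copy of $\mathcal N$ if there are distinct sets in $\mathcal Q$ whose inclusion relations are exactly those of $a,b,c,d$ above. A family $\mathcal F$ of subsets of $[n]=\{1,\dots,n\}$ is $\mathcal N$-saturated if $\mathcal F$ contains no induced copy of $\mathcal N$, but for every $S\subseteq[n]$ with $S\notin\mathcal F$, the family $\mathcal F\cup\{S\}$ contains an induced copy of $\mathcal N$. *)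

theory Defs
  imports Main
begin

definition induced_N :: "'a set set \<Rightarrow> 'a set \<Rightarrow> 'a set \<Rightarrow> 'a set \<Rightarrow> 'a set \<Rightarrow> bool" where
  "induced_N Q a b c d \<longleftrightarrow>
     a \<in> Q \<and> b \<in> Q \<and> c \<in> Q \<and> d \<in> Q \<and>
     a \<noteq> b \<and> a \<noteq> c \<and> a \<noteq> d \<and> b \<noteq> c \<and> b \<noteq> d \<and> c \<noteq> d \<and>
     a \<subset> c \<and> b \<subset> c \<and> b \<subset> d \<and>
     \<not> a \<subseteq> b \<and> \<not> b \<subseteq> a \<and>
     \<not> a \<subseteq> d \<and> \<not> d \<subseteq> a \<and>
     \<not> c \<subseteq> d \<and> \<not> d \<subseteq> c \<and>
     \<not> c \<subseteq> a \<and> \<not> c \<subseteq> b \<and> \<not> d \<subseteq> b"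

definition contains_induced_N :: "'a set set \<Rightarrow> bool" where
  "contains_induced_N Q \<longleftrightarrow> (\<exists>a b c d. induced_N Q a b c d)"

definition N_saturated :: "nat \<Rightarrow> nat set set \<Rightarrow> bool" where
  "N_saturated n F \<longleftrightarrow>
     F \<subseteq> Pow {1..n} \<and> \<not> contains_induced_N F \<and>
     (\<forall>S. S \<subseteq> {1..n} \<and> S \<notin> F \<longrightarrow> contains_induced_N (insert S F))"

end

theory Submission
  imports Defs
begin

lemma J_in:
  assumes nf: "\<And>a b e f. \<not> induced_N F a b e f"
    and cF: "c \<in> F" and dF: "d \<in> F" and cd: "\<not> c \<subseteq> d" "\<not> d \<subseteq> c"
    and Jdef: "J = \<Union>{y\<in>F. y \<subseteq> c \<inter> d}"
    and JF: "J \<notin> F"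
    and N: "induced_N (insert J F) a b e f"
  shows False
proof -
  have low: "\<And>y. y \<in> F \<Longrightarrow> y \<subseteq> c \<inter> d \<Longrightarrow> y \<subseteq> J" using Jdef by blast
  have Jcd: "J \<subseteq> c \<inter> d" using Jdef by blast
  have up: "\<And>y. (\<And>l. l \<in> F \<Longrightarrow> l \<subseteq> c \<inter> d \<Longrightarrow> l \<subseteq> y) \<Longrightarrow> J \<subseteq> y" using Jdef by blast
  have sub: "\<And>y. y \<subseteq> J \<Longrightarrow> y \<subseteq> c \<inter> d" using Jcd by blast
  have m: "a \<in> insert J F" "b \<in> insert J F" "e \<in> insert J F" "f \<in> insert J F"
    using N unfolding induced_N_def by auto
  have ne: "a \<noteq> b" "a \<noteq> e" "a \<noteq> f" "b \<noteq> e" "b \<noteq> f" "e \<noteq> f"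
    using N unfolding induced_N_def by auto
  have lt: "a \<subset> e" "b \<subset> e" "b \<subset> f"
    using N unfolding induced_N_def by auto
  have nc: "\<not> a \<subseteq> b" "\<not> b \<subseteq> a" "\<not> a \<subseteq> f" "\<not> f \<subseteq> a" "\<not> e \<subseteq> f" "\<not> f \<subseteq> e"
     "\<not> e \<subseteq> a" "\<not> e \<subseteq> b" "\<not> f \<subseteq> b"
    using N unfolding induced_N_def by auto
  consider "a = J" | "b = J" | "e = J" | "f = J" | "a \<in> F" "b \<in> F" "e \<in> F" "f \<in> F"
    using m by blast
  then show False
  proof cases
    case 1
    then have F: "b \<in> F" "e \<in> F" "f \<in> F" using m ne by auto
    have "l \<subseteq> f" if l: "l \<in> F" "l \<subseteq> c \<inter> d" for l
    proof (rule ccontr)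
      assume nl: "\<not> l \<subseteq> f"
      have lJ: "l \<subseteq> J" using low l by blast
      have "l \<noteq> J" using l JF by blast
      have "induced_N F l b e f"
        unfolding induced_N_def
        by (insert F l lJ nl ne lt nc 1 \<open>l \<noteq> J\<close>) (intro conjI; (assumption | order))
      then show False using nf by blast
    qed
    then have "J \<subseteq> f" using up by blast
    then show False using nc 1 by blast
  next
    case 2
    then have F: "a \<in> F" "e \<in> F" "f \<in> F" using m ne by auto
    have "l \<subseteq> a" if l: "l \<in> F" "l \<subseteq> c \<inter> d" for l
    proof (rule ccontr)
      assume nl: "\<not> l \<subseteq> a"
      have lJ: "l \<subseteq> J" using low l by blast
      have "l \<noteq> J" using l JF by blast
      have "induced_N F a l e f"
        unfolding induced_N_def
        by (insert F l lJ nl ne lt nc 2 \<open>l \<noteq> J\<close>) (intro conjI; (assumption | order))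
      then show False using nf by blast
    qed
    then have "J \<subseteq> a" using up by blast
    then show False using nc 2 by blast
  next
    case 3
    then have F: "a \<in> F" "b \<in> F" "f \<in> F" using m ne by auto
    have ac: "a \<subseteq> c" "a \<subseteq> d" "b \<subseteq> c" "b \<subseteq> d" "J \<subseteq> c" "J \<subseteq> d" using lt 3 Jcd by auto
    have fc: "f \<subseteq> c"
    proof (rule ccontr)
      assume nf': "\<not> f \<subseteq> c"
      have "induced_N F a b c f"
        unfolding induced_N_def
        by (insert F ac cd cF nf' ne lt nc 3) (intro conjI; (assumption | order))
      then show False using nf by blast
    qed
    have fd: "f \<subseteq> d"
    proof (rule ccontr)
      assume nf': "\<not> f \<subseteq> d"
      have "induced_N F a b d f"
        unfolding induced_N_def
        by (insert F ac cd dF nf' ne lt nc 3) (intro conjI; (assumption | order))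
      then show False using nf by blast
    qed
    have "f \<subseteq> J" using low F fc fd by blast
    then show False using nc 3 by blast
  next
    case 4
    then have F: "a \<in> F" "b \<in> F" "e \<in> F" using m ne by auto
    have bc: "b \<subseteq> c" "b \<subseteq> d" "J \<subseteq> c" "J \<subseteq> d" using lt 4 Jcd by auto
    have ae: "a \<subseteq> e" using lt by blast
    have 1: "a \<subseteq> c \<or> e \<subseteq> c"
    proof (rule ccontr)
      assume h0: "\<not> (a \<subseteq> c \<or> e \<subseteq> c)"
      then have h: "\<not> a \<subseteq> c" "\<not> e \<subseteq> c" by auto
      have "induced_N F a b e c"
        unfolding induced_N_def
        by (insert F bc cd cF h ne lt nc 4) (intro conjI; (assumption | order))
      then show False using nf by blast
    qed
    have 2: "a \<subseteq> d \<or> e \<subseteq> d"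
    proof (rule ccontr)
      assume h0: "\<not> (a \<subseteq> d \<or> e \<subseteq> d)"
      then have h: "\<not> a \<subseteq> d" "\<not> e \<subseteq> d" by auto
      have "induced_N F a b e d"
        unfolding induced_N_def
        by (insert F bc cd dF h ne lt nc 4) (intro conjI; (assumption | order))
      then show False using nf by blast
    qed
    show False
    proof (cases "e \<subseteq> c \<and> e \<subseteq> d")
      case True
      then have "e \<subseteq> J" using low F by blast
      then show False using nc 4 by blast
    next
      case False
      then have "a \<subseteq> c \<inter> d" using 1 2 ae by blast
      then have "a \<subseteq> J" using low F by blast
      then show False using nc 4 by blast
    qed
  next
    case 5
    then have "induced_N F a b e f" using N unfolding induced_N_def by blast
    then show False using nf by blast
  qed
qed


theorem lemma3p2:
  fixes n :: nat and F :: "nat set set" and B B' :: "nat set"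
  assumes "n > 0"
    and "N_saturated n F"
    and "B' \<subseteq> {1..n}" and "B' \<notin> F"
    and "B \<in> F" and "B \<subset> B'"
    and "\<exists>x c d. induced_N (insert B' F) B' x c d \<or> induced_N (insert B' F) x B' c d"
  shows "\<exists>x c d. (induced_N (insert B' F) B' x c d \<or> induced_N (insert B' F) x B' c d)
                 \<and> B \<subseteq> x"
proof -
  have FP: "F \<subseteq> Pow {1..n}" and nf0: "\<not> contains_induced_N F"
    and sat: "\<And>S. S \<subseteq> {1..n} \<Longrightarrow> S \<notin> F \<Longrightarrow> contains_induced_N (insert S F)"
    using assms(2) unfolding N_saturated_def by auto
  have nf: "\<And>a b e f. \<not> induced_N F a b e f" using nf0 unfolding contains_induced_N_def by blast
  have BF: "B \<in> F" and BB: "B \<subset> B'" and B'F: "B' \<notin> F" using assms by auto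
  obtain x c d where H: "induced_N (insert B' F) B' x c d \<or> induced_N (insert B' F) x B' c d"
    using assms(7) by blast
  then show ?thesis
  proof
    assume N: "induced_N (insert B' F) x B' c d"
    have m: "x \<in> insert B' F" "c \<in> insert B' F" "d \<in> insert B' F"
      using N unfolding induced_N_def by auto
    have ne: "x \<noteq> B'" "x \<noteq> c" "x \<noteq> d" "B' \<noteq> c" "B' \<noteq> d" "c \<noteq> d"
      using N unfolding induced_N_def by auto
    have lt: "x \<subset> c" "B' \<subset> c" "B' \<subset> d"
      using N unfolding induced_N_def by auto
    have nc: "\<not> x \<subseteq> B'" "\<not> B' \<subseteq> x" "\<not> x \<subseteq> d" "\<not> d \<subseteq> x" "\<not> c \<subseteq> d" "\<not> d \<subseteq> c"
     "\<not> c \<subseteq> x" "\<not> c \<subseteq> B'" "\<not> d \<subseteq> B'"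
      using N unfolding induced_N_def by auto
    have F: "x \<in> F" "c \<in> F" "d \<in> F" using m ne by auto
    have "B \<subseteq> x"
    proof (rule ccontr)
      assume h: "\<not> B \<subseteq> x"
      have "induced_N F x B c d"
        unfolding induced_N_def
        by (insert F BF BB h ne lt nc) (intro conjI; (assumption | order))
      then show False using nf by blast
    qed
    then show ?thesis using N by blast
  next
    assume N: "induced_N (insert B' F) B' x c d"
    have m: "x \<in> insert B' F" "c \<in> insert B' F" "d \<in> insert B' F"
      using N unfolding induced_N_def by auto
    have ne: "B' \<noteq> x" "B' \<noteq> c" "B' \<noteq> d" "x \<noteq> c" "x \<noteq> d" "c \<noteq> d"
      using N unfolding induced_N_def by auto
    have lt: "B' \<subset> c" "x \<subset> c" "x \<subset> d"
      using N unfolding induced_N_def by auto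
    have nc: "\<not> B' \<subseteq> x" "\<not> x \<subseteq> B'" "\<not> B' \<subseteq> d" "\<not> d \<subseteq> B'" "\<not> c \<subseteq> d" "\<not> d \<subseteq> c"
     "\<not> c \<subseteq> B'" "\<not> c \<subseteq> x" "\<not> d \<subseteq> x"
      using N unfolding induced_N_def by auto
    have F: "x \<in> F" "c \<in> F" "d \<in> F" using m ne by auto
    show ?thesis
    proof (cases "B \<subseteq> x")
      case True
      then show ?thesis using N by blast
    next
      case False
      have Bd: "B \<subseteq> d"
      proof (rule ccontr)
        assume h: "\<not> B \<subseteq> d"
        have "induced_N F B x c d"
          unfolding induced_N_def
          by (insert F BF BB h False ne lt nc) (intro conjI; (assumption | order))
        then show False using nf by blast
      qed
      define J where "J = \<Union>{y\<in>F. y \<subseteq> c \<inter> d}"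
      have cn: "c \<subseteq> {1..n}" using F FP by blast
      have Jc: "J \<subseteq> c" "J \<subseteq> d" unfolding J_def by blast+
      have JF: "J \<in> F"
      proof (rule ccontr)
        assume JF: "J \<notin> F"
        have "J \<subseteq> {1..n}" using Jc cn by blast
        then have "contains_induced_N (insert J F)" using sat JF by blast
        then obtain a b e f where "induced_N (insert J F) a b e f"
          unfolding contains_induced_N_def by blast
        then show False using J_in[OF nf F(2) F(3) nc(5) nc(6) J_def JF] by blast
      qed
      have BJ: "B \<subseteq> J" using BF BB lt Bd unfolding J_def by blast
      have xJ: "x \<subseteq> J" using F lt unfolding J_def by blast
      have JB': "J \<noteq> B'" using JF B'F by blast
      have mm: "B' \<in> insert B' F" "J \<in> insert B' F" "c \<in> insert B' F" "d \<in> insert B' F"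
        using JF m by auto
      have "induced_N (insert B' F) B' J c d"
        unfolding induced_N_def
        by (insert mm Jc BJ xJ JB' ne lt nc) (intro conjI; (assumption | order))
      then show ?thesis using BJ by blast
    qed
  qed
qed

end
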